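(* For any $p,q>0$ with $\tfrac1p+\tfrac1q=1$, the function \[ f(s)=\frac{s\log(ps)+(1-s)\log(q(1-s))}{(s-\tfrac1p)^2},\qquad s\in(0,1), \] is convex. *)

theory Defs
  imports "HOL-Analysis.Analysis"
begin

text \<open>The function f of the paper, extended by continuity at the removable
singularity s = 1/p (where numerator and denominator both vanish); the limit
there is (1/s + 1/(1-s))/2 at s = 1/p, i.e. (p+q)/2.\<close>
definition fC1 :: "real \<Rightarrow> real \<Rightarrow> real \<Rightarrow> real" where
  "fC1 p q s = (if s = 1/p then (p + q) / 2
     else (s * ln (p * s) + (1 - s) * ln (q * (1 - s))) / (s - 1/p)^2)"

end

theory Submission
  imports Defs
begin

lemma inv_cvx:
  fixes x y t :: real
  assumes "x > 0" "y > 0" "0 \<le> t" "t \<le> 1"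
  shows "1 / ((1 - t) * x + t * y) \<le> (1 - t) * (1/x) + t * (1/y)"
proof -
  have "convex_on {0<..} (inverse :: real \<Rightarrow> real)"
    by (rule convex_on_inverse) auto
  from convex_onD[OF this, of t x y] assms show ?thesis
    by (simp add: divide_inverse)
qed

lemma seg_in:
  fixes a s u :: real
  assumes a: "0 < a" "a < 1" and s: "0 < s" "s < 1" and u: "u \<in> {0..1}"
  shows "0 < a + u*(s-a) \<and> a + u*(s-a) < 1"
proof -
  have "a + u*(s-a) = (1-u)*a + u * s" by (simp add: algebra_simps)
  moreover have "0 < (1-u)*a + u * s" using u a s
    by (cases "u = 0") (auto intro: add_nonneg_pos add_pos_nonneg)
  moreover have "(1-u)*a + u * s < 1"
  proof (cases "u = 0")
    case True thus ?thesis using a by simp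
  next
    case False
    have "(1-u)*a \<le> (1-u)*1" using u a by (intro mult_left_mono) auto
    moreover have "u * s < u * 1" using u s False by (intro mult_strict_left_mono) auto
    ultimately show ?thesis by simp
  qed
  ultimately show ?thesis by simp
qed

lemma fC1_integral:
  fixes p q s :: real
  assumes p: "p > 0" and q: "q > 0" and pq: "1/p + 1/q = 1" and s: "0 < s" "s < 1"
  defines "a \<equiv> 1/p"
  shows "((\<lambda>u. (1 - u) * (1/(a + u*(s-a)) + 1/(1 - (a + u*(s-a))))) has_integral fC1 p q s) {0..1}"
proof -
  have a: "0 < a" "a < 1" proof -
    have "1/p < 1" using assms by (smt (verit) divide_pos_pos)
    thus "0 < a" "a < 1" using assms unfolding a_def by auto
  qed
  have qa: "q * (1 - a) = 1" using pq q p unfolding a_def by (simp add: field_simps)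
  have pa: "p * a = 1" using p unfolding a_def by simp
  have tin: "0 < a + u*(s-a) \<and> a + u*(s-a) < 1" if "u \<in> {0..1}" for u
    using seg_in[OF a s that] .
  show ?thesis
  proof (cases "s = a")
    case True
    have "((\<lambda>u. (1 - u) * (1/a + 1/(1-a))) has_integral (1/2) * (1/a + 1/(1-a))) {0..1}"
    proof -
      have "((\<lambda>u. (1 - u)) has_integral 1/2) {0..1::real}"
      proof -
        have "((\<lambda>u::real. 1 - u) has_integral ((\<lambda>u. u - u^2/2) 1 - (\<lambda>u. u - u^2/2) 0)) {0..1}"
          by (rule fundamental_theorem_of_calculus) (auto simp flip: has_real_derivative_iff_has_vector_derivative intro!: derivative_eq_intros)
        then show ?thesis by simp
      qed
      from has_integral_mult_left[OF this, of "1/a + 1/(1-a)"] show ?thesis by simp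
    qed
    moreover have fe: "fC1 p q s = (1/2) * (1/a + 1/(1-a))"
    proof -
      have "1/(1-a) = q" using qa q a by (simp add: field_simps)
      then show ?thesis using True unfolding fC1_def a_def using p by simp
    qed
    ultimately show ?thesis using True by (simp only: fe diff_self mult_zero_right add_0_right)
  next
    case False
    define h where "h = s - a"
    have h: "h \<noteq> 0" using False h_def by simp
    define G where "G u = (s * ln (p * (a + u*h)) + (1 - s) * ln (q * (1 - (a + u*h)))) / h^2" for u
    have "((\<lambda>u. (1 - u) * (1/(a + u*h) + 1/(1 - (a + u*h)))) has_integral (G 1 - G 0)) {0..1}"
    proof (rule fundamental_theorem_of_calculus)
      fix u :: real assume u: "u \<in> {0..1}"
      from tin[OF u] have t1: "0 < a + u*h" and t2: "a + u*h < 1" by (auto simp: h_def)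
      have pt: "p * (a + u*h) > 0" using p t1 by simp
      have qt: "q * (1 - (a + u*h)) > 0" using q t2 by simp
      define t where "t = a + u*h"
      have D0: "((\<lambda>u. s * ln (p * (a + u*h)) + (1 - s) * ln (q * (1 - (a + u*h)))) has_real_derivative
          (s * h / t - (1-s) * h / (1-t))) (at u)"
        using pt qt by (auto intro!: derivative_eq_intros simp: t_def mult.commute)
      have D: "(G has_real_derivative (s * h / t - (1-s) * h / (1-t)) / h^2) (at u)"
        unfolding G_def by (rule DERIV_cdivide[OF D0])
      have E: "(s * h / t - (1-s) * h / (1-t)) / h^2
          = (1 - u) * (1/(a + u*h) + 1/(1 - (a + u*h)))"
      proof -
        have tt: "t \<noteq> 0" "1 - t \<noteq> 0" using t1 t2 by (auto simp: t_def)
        have st: "s - t = h * (1-u)" unfolding t_def h_def by (simp add: algebra_simps)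
        have "s * h / t - (1-s) * h / (1-t) = h * ((s - t)/(t*(1-t)))"
          using tt by (simp add: field_simps)
        also have "\<dots> = h^2 * ((1-u)/(t*(1-t)))" unfolding st by (simp add: power2_eq_square)
        finally have "(s * h / t - (1-s) * h / (1-t)) / h^2 = (1-u)/(t*(1-t))"
          using h by simp
        also have "\<dots> = (1 - u) * (1/t + 1/(1 - t))" using tt by (simp add: field_simps)
        finally show ?thesis by (simp add: t_def)
      qed
      show "(G has_vector_derivative (1 - u) * (1/(a + u*h) + 1/(1 - (a + u*h)))) (at u within {0..1})"
        using has_field_derivative_at_within[OF D] unfolding E
        by (simp add: has_real_derivative_iff_has_vector_derivative)
    qed simp
    moreover have "G 1 - G 0 = fC1 p q s"
      using False h qa pa unfolding G_def fC1_def h_def a_def by simp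
    ultimately show ?thesis unfolding h_def by simp
  qed
qed

theorem lemmaC1:
  fixes p q :: real
  assumes "p > 0" and "q > 0" and "1/p + 1/q = 1"
  shows "convex_on {0<..<1} (fC1 p q)"
proof (rule convex_onI)
  show "convex {0<..<1::real}" by simp
  fix t x y :: real
  assume t: "0 < t" "t < 1" and x: "x \<in> {0<..<1}" and y: "y \<in> {0<..<1}"
  define a where "a = 1/p"
  define I where "I s u = (1 - u) * (1/(a + u*(s-a)) + 1/(1 - (a + u*(s-a))))" for s u
  define z where "z = (1 - t) *\<^sub>R x + t *\<^sub>R y"
  have z: "z \<in> {0<..<1}" using x y t unfolding z_def
    using convex_real_interval(8)[of 0 1] by (simp add: convex_alt)
  have Ix: "(I x has_integral fC1 p q x) {0..1}" using fC1_integral[OF assms, of x] x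
    unfolding I_def a_def by auto
  have Iy: "(I y has_integral fC1 p q y) {0..1}" using fC1_integral[OF assms, of y] y
    unfolding I_def a_def by auto
  have Iz: "(I z has_integral fC1 p q z) {0..1}" using fC1_integral[OF assms, of z] z
    unfolding I_def a_def by auto
  have Ic: "((\<lambda>u. (1-t) * I x u + t * I y u) has_integral (1-t) * fC1 p q x + t * fC1 p q y) {0..1}"
    by (intro has_integral_add has_integral_mult_right Ix Iy)
  show "fC1 p q z \<le> (1 - t) * fC1 p q x + t * fC1 p q y"
  proof (rule has_integral_le[OF Iz Ic])
    fix u :: real assume u: "u \<in> {0..1}"
    have a: "0 < a" "a < 1" proof -
    have "1/p < 1" using assms by (smt (verit) divide_pos_pos)
    thus "0 < a" "a < 1" using assms unfolding a_def by auto
  qed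
    have tx: "0 < a + u*(x-a)" "a + u*(x-a) < 1" using seg_in[OF a, of x u] x u by auto
    have ty: "0 < a + u*(y-a)" "a + u*(y-a) < 1" using seg_in[OF a, of y u] y u by auto
    have e1: "a + u*(z-a) = (1-t) * (a + u*(x-a)) + t * (a + u*(y-a))"
      unfolding z_def by (simp add: algebra_simps)
    have e2: "1 - (a + u*(z-a)) = (1-t) * (1 - (a + u*(x-a))) + t * (1 - (a + u*(y-a)))"
      unfolding z_def by (simp add: algebra_simps)
    have "1/(a + u*(z-a)) \<le> (1-t) * (1/(a + u*(x-a))) + t * (1/(a + u*(y-a)))"
      unfolding e1 by (rule inv_cvx) (use tx ty t in auto)
    moreover have "1/(1 - (a + u*(z-a))) \<le> (1-t) * (1/(1 - (a + u*(x-a)))) + t * (1/(1 - (a + u*(y-a))))"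
      unfolding e2 by (rule inv_cvx) (use tx ty t in auto)
    ultimately have "1/(a + u*(z-a)) + 1/(1 - (a + u*(z-a))) \<le>
        (1-t) * (1/(a + u*(x-a)) + 1/(1 - (a + u*(x-a)))) + t * (1/(a + u*(y-a)) + 1/(1 - (a + u*(y-a))))"
      by (simp add: algebra_simps)
    from mult_left_mono[OF this, of "1-u"] u show "I z u \<le> (1-t) * I x u + t * I y u"
      unfolding I_def by (simp add: algebra_simps)
  qed
qed

end
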